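(* Let $S\in\mathrm{Sp}(2n,\mathbb R)$ with largest singular value $e^{s}$, let $\bm f\in\mathbb Z_{\ge0}^n$ with $f_{\max}=\max_if_i$, and let $M=S\,\mathrm{diag}(D,D)\,S^T$ where $D=\mathrm{diag}(\tfrac12+f_1,\dots,\tfrac12+f_n)$ (the covariance matrix of $\mathcal U_S|\bm f\rangle$). Let $\varepsilon\ge0$ and let $F$ be a real symmetric matrix with $\|F\|\le1$ such that $M'=M+\varepsilon F$ is a valid covariance matrix. If $R'\in\mathrm{Sp}(2n,\mathbb R)$ satisfies $M'=R'\,\mathrm{diag}(D',D')\,R'^T$ for a diagonal matrix $D'$ with positive entries, then $$\|R'\|=\|R'^{-1}\|\le\sqrt{e^{2s}(1+2f_{\max})+2\varepsilon}.$$
   Context: $\mathrm{Sp}(2n,\mathbb R)=\{S\in\mathbb R^{2n\times2n}: S\Omega S^T=\Omega\}$ with $\Omega=\begin{pmatrix}0&I\\-I&0\end{pmatrix}$. A valid covariance matrix is a real symmetric positive-definite $2n\times 2n$ matrix all of whose symplectic eigenvalues are $\ge 1/2$ (the symplectic eigenvalues of $M$ are the $\nu_i>0$ with $M=R\,\mathrm{diag}(\nu,\nu)R^T$ for some $R\in\mathrm{Sp}(2n,\mathbb R)$, by Williamson's theorem). $\|\cdot\|$ is the operator norm. *)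

theory Defs
  imports "HOL-Analysis.Analysis"
begin

text \<open>Real 2n x 2n matrices are indexed by the sum type 'n + 'n: Inl i is the
  i-th position coordinate (first block), Inr i the i-th momentum coordinate.\<close>

definition Omega :: "real ^ ('n::finite + 'n) ^ ('n + 'n)" where
  "Omega = (\<chi> a b. case (a, b) of
      (Inl i, Inr j) \<Rightarrow> (if i = j then 1 else 0)
    | (Inr i, Inl j) \<Rightarrow> (if i = j then -1 else 0)
    | _ \<Rightarrow> 0)"

definition symplectic :: "real ^ ('n::finite + 'n) ^ ('n + 'n) \<Rightarrow> bool" where
  "symplectic S \<longleftrightarrow> S ** Omega ** transpose S = Omega"

definition diag2 :: "('n::finite \<Rightarrow> real) \<Rightarrow> real ^ ('n + 'n) ^ ('n + 'n)" where
  "diag2 d = (\<chi> a b. if a = b then (case a of Inl i \<Rightarrow> d i | Inr i \<Rightarrow> d i) else 0)"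

definition opnorm :: "real ^ 'm::finite ^ 'k::finite \<Rightarrow> real" where
  "opnorm A = onorm (\<lambda>x. A *v x)"

definition largest_singular_value :: "real ^ 'm::finite ^ 'm \<Rightarrow> real" where
  "largest_singular_value A =
     Sup {sqrt l | l. \<exists>v. v \<noteq> 0 \<and> (transpose A ** A) *v v = l *\<^sub>R v}"

definition symmetric_mat :: "real ^ 'm::finite ^ 'm \<Rightarrow> bool" where
  "symmetric_mat M \<longleftrightarrow> transpose M = M"

definition pos_def :: "real ^ 'm::finite ^ 'm \<Rightarrow> bool" where
  "pos_def M \<longleftrightarrow> (\<forall>x. x \<noteq> 0 \<longrightarrow> x \<bullet> (M *v x) > 0)"

definition symplectic_eigenvalues :: "real ^ ('n::finite + 'n) ^ ('n + 'n) \<Rightarrow> real set" where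
  "symplectic_eigenvalues M = {x. \<exists>R \<nu> i. symplectic R \<and> (\<forall>j. \<nu> j > 0) \<and>
       M = R ** diag2 \<nu> ** transpose R \<and> x = \<nu> i}"

definition valid_cov :: "real ^ ('n::finite + 'n) ^ ('n + 'n) \<Rightarrow> bool" where
  "valid_cov M \<longleftrightarrow> symmetric_mat M \<and> pos_def M \<and>
     (\<forall>x \<in> symplectic_eigenvalues M. x \<ge> 1/2)"

end

theory Submission
  imports Defs
begin

declare transpose_matrix_vector[simp del]

lemma sum_UNIV_Plus: "sum g (UNIV :: ('a::finite + 'b::finite) set) = sum (\<lambda>i. g (Inl i)) UNIV + sum (\<lambda>i. g (Inr i)) UNIV"
  by (subst UNIV_Plus_UNIV[symmetric], subst sum.Plus) (auto simp: o_def)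

lemma ite_sq: "(if P then a else 0) * (if P then b else 0) = (if P then a * b else (0::real))" by simp

lemma Omega_orth: "transpose (Omega :: real ^ ('n::finite + 'n) ^ ('n + 'n)) ** Omega = mat 1"
  apply (simp add: vec_eq_iff matrix_matrix_mult_def transpose_def Omega_def mat_def sum_UNIV_Plus)
  apply (intro allI)
  subgoal for a b by (cases a; cases b) (auto intro!: sum.neutral simp: ite_sq)
  done

lemma Omega_orth2: "(Omega :: real ^ ('n::finite + 'n) ^ ('n + 'n)) ** transpose Omega = mat 1"
  using Omega_orth matrix_left_right_inverse by blast

lemma inner_mv: "inner x (A *v y) = inner (transpose A *v x) (y :: real^'n::finite)"
  by (simp add: dot_lmul_matrix transpose_matrix_vector)

lemma norm_orth: assumes "transpose Q ** Q = mat 1" shows "norm (Q *v x) = norm (x :: real^'n::finite)"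
proof -
  have "inner (Q *v x) (Q *v x) = inner x x"
    by (simp add: inner_mv matrix_vector_mul_assoc assms)
  then show ?thesis by (simp add: norm_eq_sqrt_inner)
qed

lemma opnorm_bound: "norm (A *v x) \<le> opnorm A * norm x"
  unfolding opnorm_def by (rule onorm) simp

lemma opnorm_le: "(\<And>x. norm (A *v x) \<le> b * norm x) \<Longrightarrow> opnorm (A :: real^'n::finite^'m::finite) \<le> b"
  unfolding opnorm_def by (rule onorm_le)

lemma opnorm_transpose_le: "opnorm (transpose A) \<le> opnorm (A :: real^'n::finite^'m::finite)"
proof (rule opnorm_le)
  fix x :: "real^'m"
  have "norm (transpose A *v x) ^ 2 = inner (transpose A *v x) (transpose A *v x)"
    by (rule power2_norm_eq_inner)
  also have "\<dots> = inner x (A *v (transpose A *v x))"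
    by (rule inner_mv[symmetric])
  also have "\<dots> \<le> norm x * norm (A *v (transpose A *v x))"
    by (rule norm_cauchy_schwarz)
  also have "\<dots> \<le> norm x * (opnorm A * norm (transpose A *v x))"
    by (rule mult_left_mono[OF opnorm_bound norm_ge_zero])
  finally have h: "norm (transpose A *v x) * norm (transpose A *v x) \<le> (opnorm A * norm x) * norm (transpose A *v x)"
    by (simp add: power2_eq_square ac_simps)
  show "norm (transpose A *v x) \<le> opnorm A * norm x"
  proof (cases "norm (transpose A *v x) = 0")
    case True
    have "0 \<le> opnorm A" unfolding opnorm_def by (rule onorm_pos_le) simp
    then show ?thesis using True by simp
  next
    case False
    then have "norm (transpose A *v x) > 0" by simp
    with h show ?thesis by (rule mult_right_le_imp_le)
  qed
qed

lemma opnorm_transpose: "opnorm (transpose A) = opnorm (A :: real^'n::finite^'m::finite)"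
  by (metis opnorm_transpose_le transpose_transpose order_antisym)

lemma lsv_bound:
  fixes A :: "real^'m::finite^'m"
  shows "norm (A *v y) \<le> largest_singular_value A * norm y"
proof -
  have "continuous_on (sphere (0::real^'m) 1) (\<lambda>x. norm (A *v x))"
    by (intro continuous_intros)
  then obtain x0 where x0: "x0 \<in> sphere (0::real^'m) 1" and mx: "\<And>y. y \<in> sphere 0 1 \<Longrightarrow> norm (A *v y) \<le> norm (A *v x0)"
    using continuous_attains_sup[of "sphere (0::real^'m) 1" "\<lambda>x. norm (A *v x)"] by auto
  define c where "c = norm (A *v x0)"
  have nx0: "norm x0 = 1" using x0 by simp
  have c0: "c \<ge> 0" by (simp add: c_def)
  have bnd: "norm (A *v y) \<le> c * norm y" for y
  proof (cases "y = 0")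
    case False
    have "(1 / norm y) *\<^sub>R y \<in> sphere 0 1" using False by simp
    from mx[OF this] have "norm (A *v y) / norm y \<le> c"
      by (simp add: matrix_vector_mult_scaleR c_def)
    then show ?thesis using False by (simp add: pos_divide_le_eq)
  qed simp
  define g where "g y = c\<^sup>2 * (inner y y) - inner (A *v y) (A *v y)" for y
  have g0: "g y \<ge> 0" for y
  proof -
    have "norm (A *v y) ^ 2 \<le> (c * norm y) ^ 2" using bnd[of y] by (simp add: power_mono)
    then show ?thesis by (simp add: g_def power2_norm_eq_inner[symmetric] power_mult_distrib)
  qed
  define z where "z = c\<^sup>2 *\<^sub>R x0 - (transpose A ** A) *v x0"
  have gx0: "g x0 = 0" using nx0 by (simp add: g_def c_def power2_norm_eq_inner[symmetric])
  have key: "inner (A *v x0) (A *v z) = inner ((transpose A ** A) *v x0) z"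
    using inner_mv[of "A *v x0" A z] by (simp only: matrix_vector_mul_assoc)
  have exp: "g (x0 + t *\<^sub>R z) = g x0 + 2 * t * inner z z + t\<^sup>2 * g z" for t
  proof -
    have "inner z z = inner (c\<^sup>2 *\<^sub>R x0 - (transpose A ** A) *v x0) z"
      by (simp only: z_def[symmetric])
    also have "\<dots> = c\<^sup>2 * inner x0 z - inner ((transpose A ** A) *v x0) z"
      by (simp add: inner_diff_left)
    finally have h: "inner z z = c\<^sup>2 * inner x0 z - inner (A *v x0) (A *v z)"
      by (simp only: key)
    have e1: "inner (x0 + t *\<^sub>R z) (x0 + t *\<^sub>R z) = inner x0 x0 + 2 * t * inner x0 z + t\<^sup>2 * inner z z"
      by (simp add: inner_add_left inner_add_right inner_commute power2_eq_square algebra_simps)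
    have e2: "inner (A *v (x0 + t *\<^sub>R z)) (A *v (x0 + t *\<^sub>R z)) = inner (A *v x0) (A *v x0) + 2 * t * inner (A *v x0) (A *v z) + t\<^sup>2 * inner (A *v z) (A *v z)"
      by (simp add: matrix_vector_right_distrib matrix_vector_mult_scaleR inner_add_left inner_add_right inner_commute power2_eq_square algebra_simps)
    show ?thesis unfolding g_def e1 e2 h by (simp add: power2_eq_square algebra_simps)
  qed
  have "z = 0"
  proof (rule ccontr)
    assume "z \<noteq> 0"
    define N where "N = inner z z"
    have N0: "N > 0" using \<open>z \<noteq> 0\<close> by (simp add: N_def)
    define G where "G = g z"
    have G0: "G \<ge> 0" by (simp add: G_def g0)
    define t where "t = - N / (G + 1)"
    have t0: "t < 0" using N0 G0 by (simp add: t_def)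
    have "t * G > - N" using N0 G0 by (simp add: t_def field_simps)
    then have "2 * N + t * G > 0" using N0 by linarith
    then have "t * (2 * N + t * G) < 0" using t0 by (simp add: mult_neg_pos)
    moreover have "g (x0 + t *\<^sub>R z) = t * (2 * N + t * G)"
      by (simp add: exp gx0 N_def G_def power2_eq_square algebra_simps)
    ultimately show False using g0 by (metis not_le)
  qed
  then have eig: "(transpose A ** A) *v x0 = c\<^sup>2 *\<^sub>R x0" by (simp add: z_def)
  have x0nz: "x0 \<noteq> 0" using nx0 by auto
  have Sup: "largest_singular_value A = c"
    unfolding largest_singular_value_def
  proof (rule cSup_eq_maximum)
    show "c \<in> {sqrt l |l. \<exists>v. v \<noteq> 0 \<and> (transpose A ** A) *v v = l *\<^sub>R v}"
      unfolding mem_Collect_eq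
      using eig x0nz c0 by (intro exI[of _ "c\<^sup>2"] conjI exI[of _ x0]) simp_all
  next
    fix r assume "r \<in> {sqrt l |l. \<exists>v. v \<noteq> 0 \<and> (transpose A ** A) *v v = l *\<^sub>R v}"
    then obtain l v where r: "r = sqrt l" and v: "v \<noteq> 0" and ev: "(transpose A ** A) *v v = l *\<^sub>R v" by auto
    have "l * inner v v = inner v ((transpose A ** A) *v v)" by (simp add: ev)
    also have "\<dots> = inner (A *v v) (A *v v)"
      using inner_mv[of "A *v v" A v] by (simp only: matrix_vector_mul_assoc inner_commute)
    also have "\<dots> \<le> c\<^sup>2 * inner v v" using g0[of v] by (simp add: g_def)
    finally have "l * inner v v \<le> c\<^sup>2 * inner v v" .
    moreover have "inner v v > 0" using v by simp
    ultimately have "l \<le> c\<^sup>2" by (rule mult_right_le_imp_le)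
    then have "sqrt l \<le> sqrt (c\<^sup>2)" by (rule real_sqrt_le_mono)
    then show "r \<le> c" using c0 r by simp
  qed
  show ?thesis using bnd Sup by simp
qed

lemma ite_mult: "(if P then a else 0) * b = (if P then a * b else (0::real))" by simp

lemma scaleR_mv: "(c *\<^sub>R A) *v x = c *\<^sub>R (A *v (x::real^'n::finite))"
  by (simp add: vec_eq_iff matrix_vector_mult_def sum_distrib_left algebra_simps)

lemma diag2_mv: "diag2 g *v y = (\<chi> a. (case a of Inl i \<Rightarrow> g i | Inr i \<Rightarrow> g i) * y $ a)"
  by (simp add: vec_eq_iff diag2_def matrix_vector_mult_def ite_mult)

lemma diag2_lower:
  assumes "\<And>i. g i \<ge> m"
  shows "inner y (diag2 g *v y) \<ge> m * inner y y"
proof -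
  have "m * inner y y = (\<Sum>a\<in>UNIV. m * (y $ a * y $ a))" by (simp add: inner_vec_def sum_distrib_left)
  also have "\<dots> \<le> (\<Sum>a\<in>UNIV. y $ a * ((case a of Inl i \<Rightarrow> g i | Inr i \<Rightarrow> g i) * y $ a))"
  proof (rule sum_mono)
    fix a :: "'a + 'a"
    have mle: "m \<le> (case a of Inl i \<Rightarrow> g i | Inr i \<Rightarrow> g i)" using assms by (cases a) auto
    then show "m * (y $ a * y $ a) \<le> y $ a * ((case a of Inl i \<Rightarrow> g i | Inr i \<Rightarrow> g i) * y $ a)"
    proof -
      have "m * (y $ a * y $ a) \<le> (case a of Inl i \<Rightarrow> g i | Inr i \<Rightarrow> g i) * (y $ a * y $ a)"
        by (rule mult_right_mono) (use mle in simp_all)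
      then show ?thesis by (simp add: ac_simps)
    qed
  qed
  also have "\<dots> = inner y (diag2 g *v y)" by (simp add: diag2_mv inner_vec_def)
  finally show ?thesis .
qed

lemma diag2_upper:
  assumes "\<And>i. g i \<le> m"
  shows "inner y (diag2 g *v y) \<le> m * inner y y"
proof -
  have "inner y (diag2 g *v y) = (\<Sum>a\<in>UNIV. y $ a * ((case a of Inl i \<Rightarrow> g i | Inr i \<Rightarrow> g i) * y $ a))"
    by (simp add: diag2_mv inner_vec_def)
  also have "\<dots> \<le> (\<Sum>a\<in>UNIV. m * (y $ a * y $ a))"
  proof (rule sum_mono)
    fix a :: "'a + 'a"
    have mle: "m \<ge> (case a of Inl i \<Rightarrow> g i | Inr i \<Rightarrow> g i)" using assms by (cases a) auto
    then show "m * (y $ a * y $ a) \<ge> y $ a * ((case a of Inl i \<Rightarrow> g i | Inr i \<Rightarrow> g i) * y $ a)"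
    proof -
      have "(case a of Inl i \<Rightarrow> g i | Inr i \<Rightarrow> g i) * (y $ a * y $ a) \<le> m * (y $ a * y $ a)"
        by (rule mult_right_mono) (use mle in simp_all)
      then show ?thesis by (simp add: ac_simps)
    qed
  qed
  also have "\<dots> = m * inner y y" by (simp add: inner_vec_def sum_distrib_left)
  finally show ?thesis .
qed

lemma quad_form: fixes A G :: "real^'n::finite^'n" shows "inner x ((A ** G ** transpose A) *v x) = inner (transpose A *v x) (G *v (transpose A *v x))"
proof -
  have "(A ** G ** transpose A) *v x = A *v (G *v (transpose A *v x))"
    by (simp add: matrix_vector_mul_assoc matrix_mul_assoc)
  note eq = this
  show ?thesis by (subst eq) (rule inner_mv[of x A])
qed

theorem mainTheorem8:
  fixes S R' F :: "real ^ ('n::finite + 'n) ^ ('n + 'n)"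
    and f :: "'n \<Rightarrow> nat" and d' :: "'n \<Rightarrow> real" and s \<epsilon> :: real
  assumes "symplectic S"
    and "largest_singular_value S = exp s"
    and "\<epsilon> \<ge> 0"
    and "symmetric_mat F" and "opnorm F \<le> 1"
    and "valid_cov (S ** diag2 (\<lambda>i. 1/2 + real (f i)) ** transpose S + \<epsilon> *\<^sub>R F)"
    and "symplectic R'"
    and "\<forall>i. d' i > 0"
    and "S ** diag2 (\<lambda>i. 1/2 + real (f i)) ** transpose S + \<epsilon> *\<^sub>R F
           = R' ** diag2 d' ** transpose R'"
  shows "opnorm R' = opnorm (matrix_inv R') \<and>
         opnorm R' \<le> sqrt (exp (2 * s) * (1 + 2 * real (Max (range f))) + 2 * \<epsilon>)"
proof -
  define fm where "fm = real (Max (range f))"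
  define D where "D = diag2 (\<lambda>i. 1/2 + real (f i))"
  define M' where "M' = S ** D ** transpose S + \<epsilon> *\<^sub>R F"
  have M'eq: "M' = R' ** diag2 d' ** transpose R'" using assms(9) by (simp add: M'_def D_def)
  have d'half: "d' i \<ge> 1/2" for i
  proof -
    have "d' i \<in> symplectic_eigenvalues M'"
      unfolding symplectic_eigenvalues_def
      by (rule CollectI, rule exI[of _ R'], rule exI[of _ d'], rule exI[of _ i]) (use assms(7,8) M'eq in auto)
    moreover have "\<forall>x\<in>symplectic_eigenvalues M'. x \<ge> 1/2"
      using assms(6) unfolding valid_cov_def M'_def D_def by blast
    ultimately show ?thesis by blast
  qed
  have fle: "real (f i) \<le> fm" for i
    by (simp add: fm_def)
  have fm0: "fm \<ge> 0" by (simp add: fm_def)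
  have opS: "opnorm S \<le> exp s"
    using lsv_bound[of S] assms(2) by (intro opnorm_le) simp
  define K where "K = exp (2 * s) * (1 + 2 * fm) + 2 * \<epsilon>"
  have K0: "K \<ge> 0" using fm0 assms(3) by (simp add: K_def)
  have RT: "norm (transpose R' *v x) \<le> sqrt K * norm x" for x
  proof -
    let ?y = "transpose R' *v x"
    have "1/2 * inner ?y ?y \<le> inner ?y (diag2 d' *v ?y)" by (rule diag2_lower) (rule d'half)
    also have "\<dots> = inner x (M' *v x)" by (simp add: M'eq quad_form)
    also have "\<dots> = inner (transpose S *v x) (D *v (transpose S *v x)) + \<epsilon> * inner x (F *v x)"
      by (simp add: M'_def quad_form matrix_vector_mult_add_rdistrib inner_add_right scaleR_mv)
    also have "\<dots> \<le> (1/2 + fm) * inner (transpose S *v x) (transpose S *v x) + \<epsilon> * (norm x * norm x)"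
    proof (rule add_mono)
      show "inner (transpose S *v x) (D *v (transpose S *v x)) \<le> (1/2 + fm) * inner (transpose S *v x) (transpose S *v x)"
        unfolding D_def by (rule diag2_upper) (simp add: fle)
      have "inner x (F *v x) \<le> norm x * norm (F *v x)" by (rule norm_cauchy_schwarz)
      also have "\<dots> \<le> norm x * (opnorm F * norm x)" by (simp add: mult_left_mono opnorm_bound)
      also have "\<dots> \<le> norm x * norm x" by (intro mult_left_mono) (use mult_right_mono[OF assms(5) norm_ge_zero[of x]] in auto)
      finally show "\<epsilon> * inner x (F *v x) \<le> \<epsilon> * (norm x * norm x)" using assms(3) by (simp add: mult_left_mono)
    qed
    also have "\<dots> \<le> (1/2 + fm) * (exp s * norm x)\<^sup>2 + \<epsilon> * (norm x * norm x)"
    proof -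
      have "norm (transpose S *v x) \<le> opnorm (transpose S) * norm x" by (rule opnorm_bound)
      also have "\<dots> \<le> exp s * norm x" using opS by (simp add: opnorm_transpose mult_right_mono)
      finally have "inner (transpose S *v x) (transpose S *v x) \<le> (exp s * norm x)\<^sup>2"
        by (simp add: power2_norm_eq_inner[symmetric] power_mono)
      then show ?thesis using fm0 by (simp add: mult_left_mono)
    qed
    finally have h: "1/2 * inner ?y ?y \<le> (1/2 + fm) * (exp s * norm x)\<^sup>2 + \<epsilon> * (norm x * norm x)" .
    have e2: "exp (2 * s) = (exp s)\<^sup>2" by (simp add: power2_eq_square exp_add[symmetric])
    have "inner ?y ?y \<le> 2 * ((1/2 + fm) * (exp s * norm x)\<^sup>2 + \<epsilon> * (norm x * norm x))" using mult_left_mono[OF h, of 2] by simp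
    also have "\<dots> = K * (norm x)\<^sup>2" unfolding K_def e2 by (simp add: power2_eq_square algebra_simps)
    finally have h2: "inner ?y ?y \<le> K * (norm x)\<^sup>2" .
    have "norm ?y = sqrt (inner ?y ?y)" by (simp add: norm_eq_sqrt_inner)
    also have "\<dots> \<le> sqrt (K * (norm x)\<^sup>2)" by (rule real_sqrt_le_mono) (rule h2)
    also have "\<dots> = sqrt K * norm x" by (simp add: real_sqrt_mult)
    finally show ?thesis .
  qed
  have opRT: "opnorm R' \<le> sqrt K"
    using RT by (subst opnorm_transpose[symmetric]) (rule opnorm_le)
  define B where "B = Omega ** transpose R' ** transpose Omega"
  have "R' ** B = (R' ** Omega ** transpose R') ** transpose Omega" by (simp add: B_def matrix_mul_assoc)
  also have "\<dots> = mat 1" using assms(7) Omega_orth2 by (simp add: symplectic_def)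
  finally have RB: "R' ** B = mat 1" .
  have BR: "B ** R' = mat 1" using RB matrix_left_right_inverse by blast
  have inv: "matrix_inv R' = B"
  proof -
    have "\<exists>A'. R' ** A' = mat 1 \<and> A' ** R' = mat 1" using RB BR by blast
    then have "R' ** matrix_inv R' = mat 1 \<and> matrix_inv R' ** R' = mat 1"
      unfolding matrix_inv_def by (rule someI_ex)
    then have "matrix_inv R' = matrix_inv R' ** (R' ** B)" using RB by simp
    also have "\<dots> = B" using \<open>R' ** matrix_inv R' = mat 1 \<and> matrix_inv R' ** R' = mat 1\<close>
      by (simp add: matrix_mul_assoc)
    finally show ?thesis .
  qed
  have o1: "norm (Omega *v x) = norm x" for x :: "real ^ ('n + 'n)"
    by (rule norm_orth) (rule Omega_orth)
  have o2: "norm (transpose Omega *v x) = norm x" for x :: "real ^ ('n + 'n)"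
    by (rule norm_orth) (simp add: Omega_orth2)
  have "opnorm B \<le> opnorm (transpose R')"
  proof (rule opnorm_le)
    fix x
    have "norm (B *v x) = norm (transpose R' *v (transpose Omega *v x))"
      by (simp add: B_def matrix_vector_mul_assoc[symmetric] o1)
    also have "\<dots> \<le> opnorm (transpose R') * norm x" using opnorm_bound[of "transpose R'" "transpose Omega *v x"] o2 by simp
    finally show "norm (B *v x) \<le> opnorm (transpose R') * norm x" .
  qed
  moreover have "opnorm (transpose R') \<le> opnorm B"
  proof (rule opnorm_le)
    fix x
    have "transpose Omega ** B ** Omega = (transpose Omega ** Omega) ** transpose R' ** (transpose Omega ** Omega)"
      by (simp add: B_def matrix_mul_assoc)
    also have "\<dots> = transpose R'" by (simp add: Omega_orth)
    finally have "transpose R' = transpose Omega ** B ** Omega" by simp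
    then have "norm (transpose R' *v x) = norm (B *v (Omega *v x))"
      by (simp add: matrix_vector_mul_assoc[symmetric] o2)
    also have "\<dots> \<le> opnorm B * norm x" using opnorm_bound[of B "Omega *v x"] o1 by simp
    finally show "norm (transpose R' *v x) \<le> opnorm B * norm x" .
  qed
  ultimately have "opnorm B = opnorm (transpose R')" by (rule order_antisym)
  then have "opnorm R' = opnorm (matrix_inv R')" using inv opnorm_transpose[of R'] by simp
  then show ?thesis using opRT by (simp add: K_def fm_def)
qed

end
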